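(* Let $(X_n)_{n\ge1}$ be a sequence of symmetrical random variables with finite second moments, taking values in a Hilbert space $\mathbb{H}$. Suppose the series $\sum_{n=1}^\infty X_n$ converges almost surely in $\mathbb{H}$, and there is a constant $K>0$ such that for all integers $m\ge0$ and $j\ge1$, $$\mathbb{E}\big(\|X_{m+1}+\cdots+X_{m+j}\|^4\big)\le K\,\Big(\mathbb{E}\big(\|X_{m+1}+\cdots+X_{m+j}\|^2\big)\Big)^2.$$ Then the series $\sum_{n=1}^\infty X_n$ also converges in $L^2(\Omega;\mathbb{H})$, i.e. $\lim_{m\to\infty}\sup_{j\ge1}\mathbb{E}(\|S_{m+j}-S_m\|^2)=0$ where $S_n=X_1+\cdots+X_n$.
   Context: A random variable $X$ with values in $\mathbb{H}$ is symmetrical if $X$ and $-X$ have the same distribution. No independence among the $X_n$ is assumed. *)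

theory Defs
  imports "HOL-Probability.Probability"
begin

definition symmetrical :: "'b measure \<Rightarrow> ('b \<Rightarrow> 'a::real_normed_vector) \<Rightarrow> bool" where
  "symmetrical M X \<longleftrightarrow> distr M borel X = distr M borel (\<lambda>\<omega>. - X \<omega>)"

end

theory Submission
  imports Defs
begin

lemma sq_sum_le: "norm (a + b::'a::real_normed_vector)^2 \<le> 2 * norm a ^2 + 2 * norm b ^2"
proof -
  have "norm (a+b) \<le> norm a + norm b" by (rule norm_triangle_ineq)
  hence "norm (a+b)^2 \<le> (norm a + norm b)^2" by (simp add: power_mono)
  also have "\<dots> \<le> 2 * norm a ^2 + 2 * norm b ^2"
  proof -
    have "0 \<le> (norm a - norm b)^2" by simp
    thus ?thesis by (simp add: power2_eq_square algebra_simps)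
  qed
  finally show ?thesis .
qed

lemma PZ:
  fixes Z :: "'b \<Rightarrow> real"
  assumes P: "prob_space M" and Zm: "Z \<in> borel_measurable M" and nn: "\<And>\<omega>. 0 \<le> Z \<omega>"
    and iZ: "integrable M Z" and iZ2: "integrable M (\<lambda>\<omega>. Z \<omega>^2)"
    and K: "K > 0" and c: "c = integral\<^sup>L M Z" "c > 0"
    and b: "integral\<^sup>L M (\<lambda>\<omega>. Z \<omega>^2) \<le> K * c^2"
  shows "measure M {\<omega>\<in>space M. c/2 \<le> Z \<omega>} \<ge> 1/(4*K)"
proof -
  interpret prob_space M by fact
  define A where "A = {\<omega>\<in>space M. c/2 \<le> Z \<omega>}"
  have As: "A \<in> sets M" unfolding A_def using Zm by measurable
  have Afin: "emeasure M A < \<top>" using emeasure_finite[of A] top.not_eq_extremum by blast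
  have pw: "Z \<omega> \<le> c/2 + Z \<omega>^2 / (4*K*c) + K*c * indicator A \<omega>" if "\<omega> \<in> space M" for \<omega>
  proof (cases "c/2 \<le> Z \<omega>")
    case True
    hence ind: "indicator A \<omega> = (1::real)" using that by (simp add: A_def)
    have "0 \<le> (Z \<omega> - 2*K*c)^2 / (4*K*c)" using K c by simp
    hence "Z \<omega> \<le> Z \<omega>^2 / (4*K*c) + K*c" using K c
      by (simp add: field_simps power2_eq_square)
    then show ?thesis using ind c by simp
  next
    case False
    have "0 \<le> Z \<omega>^2/(4*K*c)" using K c by simp
    moreover have "0 \<le> K*c*indicator A \<omega>" using K c by simp
    ultimately show ?thesis using False by linarith
  qed
  have iR: "integrable M (\<lambda>\<omega>. c/2 + Z \<omega>^2 / (4*K*c) + K*c * indicator A \<omega>)"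
    using iZ2 As by (intro Bochner_Integration.integrable_add integrable_divide integrable_mult_right integrable_real_indicator integrable_const) (use Afin in auto)
  have "integral\<^sup>L M Z \<le> integral\<^sup>L M (\<lambda>\<omega>. c/2 + Z \<omega>^2 / (4*K*c) + K*c * indicator A \<omega>)"
    by (rule integral_mono[OF iZ iR pw])
  hence "c \<le> integral\<^sup>L M (\<lambda>\<omega>. c/2 + Z \<omega>^2 / (4*K*c) + K*c * indicator A \<omega>)"
    using c(1) by simp
  also have "\<dots> = c/2 + integral\<^sup>L M (\<lambda>\<omega>. Z \<omega>^2) / (4*K*c) + K*c * measure M A"
  proof -
    have i1: "integrable M (\<lambda>\<omega>. c/2 + Z \<omega>^2 / (4*K*c))"
      using iZ2 by (intro Bochner_Integration.integrable_add integrable_divide integrable_const) auto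
    have i2: "integrable M (\<lambda>\<omega>. K*c * indicator A \<omega>)"
      using As by (intro integrable_mult_right integrable_real_indicator) (use Afin in auto)
    have i3: "integrable M (\<lambda>\<omega>. Z \<omega>^2 / (4*K*c))"
      using iZ2 by (intro integrable_divide) auto
    have "integral\<^sup>L M (\<lambda>\<omega>. c/2 + Z \<omega>^2 / (4*K*c) + K*c * indicator A \<omega>)
       = integral\<^sup>L M (\<lambda>\<omega>. c/2 + Z \<omega>^2 / (4*K*c)) + integral\<^sup>L M (\<lambda>\<omega>. K*c * indicator A \<omega>)"
      by (rule Bochner_Integration.integral_add[OF i1 i2])
    also have "integral\<^sup>L M (\<lambda>\<omega>. c/2 + Z \<omega>^2 / (4*K*c)) = c/2 + integral\<^sup>L M (\<lambda>\<omega>. Z \<omega>^2) / (4*K*c)"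
      using Bochner_Integration.integral_add[OF integrable_const i3] by (simp add: prob_space)
    also have "integral\<^sup>L M (\<lambda>\<omega>. K*c * indicator A \<omega>) = K*c * measure M A"
      using As by (simp add: Int_absorb2 sets.sets_into_space)
    finally show ?thesis .
  qed
  also have "\<dots> \<le> c/2 + K*c^2 / (4*K*c) + K*c * measure M A"
  proof -
    have "integral\<^sup>L M (\<lambda>\<omega>. Z \<omega>^2) / (4*K*c) \<le> K*c^2 / (4*K*c)"
      using b K c by (intro divide_right_mono) auto
    thus ?thesis by linarith
  qed
  also have "K*c^2 / (4*K*c) = c/4" using K c by (simp add: power2_eq_square)
  finally have "c/4 \<le> K * c * measure M A" by simp
  hence "1/4 \<le> K * measure M A" using c by (simp add: field_simps)
  thus ?thesis using K unfolding A_def[symmetric] by (simp add: field_simps)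
qed


lemma sum_sq_bound:
  fixes x :: "nat \<Rightarrow> 'a::real_normed_vector"
  assumes "finite F"
  shows "norm (\<Sum>i\<in>F. x i)^2 \<le> 2^card F * (\<Sum>i\<in>F. norm (x i)^2)"
  using assms
proof (induction F rule: finite_induct)
  case empty then show ?case by simp
next
  case (insert a F)
  have s0: "0 \<le> (\<Sum>i\<in>F. norm (x i)^2)" by (simp add: sum_nonneg)
  have "norm (\<Sum>i\<in>insert a F. x i)^2 = norm (x a + (\<Sum>i\<in>F. x i))^2" using insert by simp
  also have "\<dots> \<le> 2 * norm (x a)^2 + 2 * norm (\<Sum>i\<in>F. x i)^2" by (rule sq_sum_le)
  also have "\<dots> \<le> 2 * norm (x a)^2 + 2 * (2^card F * (\<Sum>i\<in>F. norm (x i)^2))"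
    using insert.IH by simp
  also have "\<dots> \<le> 2^card (insert a F) * (\<Sum>i\<in>insert a F. norm (x i)^2)"
  proof -
    have "(2::real) \<le> 2^card (insert a F)" using insert
      by (simp add: self_le_power)
    hence "2 * norm (x a)^2 \<le> 2^card (insert a F) * norm (x a)^2"
      by (simp add: mult_right_mono)
    thus ?thesis using insert by (simp add: algebra_simps)
  qed
  finally show ?case .
qed

lemma core:
  fixes f :: "'b \<Rightarrow> real"
  assumes P: "prob_space M" and K: "K > 0" and nn: "\<And>\<omega>. 0 \<le> f \<omega>"
    and fin: "(\<integral>\<^sup>+\<omega>. ennreal (f \<omega>) \<partial>M) < \<infinity>"
    and four: "(\<integral>\<^sup>+\<omega>. ennreal (f \<omega>^2) \<partial>M) \<le> ennreal K * (\<integral>\<^sup>+\<omega>. ennreal (f \<omega>) \<partial>M)^2"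
    and eps: "\<epsilon> > 0" "ennreal \<epsilon> < (\<integral>\<^sup>+\<omega>. ennreal (f \<omega>) \<partial>M)"
  shows "\<exists>B\<in>sets M. (\<forall>\<omega>\<in>B. \<epsilon>/4 \<le> f \<omega>) \<and> 1/(16*K) \<le> measure M B"
proof -
  interpret prob_space M by fact
  define F where "F = (\<integral>\<^sup>+\<omega>. ennreal (f \<omega>) \<partial>M)"
  define Fr where "Fr = enn2real F"
  have FFr: "F = ennreal Fr" using fin unfolding F_def Fr_def by (simp add: ennreal_enn2real_if)
  have Fr0: "0 \<le> Fr" unfolding Fr_def by simp
  have epsFr: "\<epsilon> < Fr" using eps FFr F_def Fr0 by (simp add: ennreal_less_iff)
  have "ennreal (Fr/2) < F" using FFr epsFr eps by (simp add: ennreal_less_iff)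
  then obtain g where g: "simple_function M g" "g \<le> (\<lambda>\<omega>. ennreal (f \<omega>))"
      and ga: "ennreal (Fr/2) < integral\<^sup>S M g"
    unfolding F_def nn_integral_def by (auto simp: less_SUP_iff)
  define h where "h \<omega> = enn2real (g \<omega>)" for \<omega>
  have gh: "g \<omega> = ennreal (h \<omega>)" for \<omega>
  proof -
    have "g \<omega> \<le> ennreal (f \<omega>)" using g(2) by (simp add: le_fun_def)
    hence "g \<omega> < \<top>" using le_less_trans by fastforce
    thus ?thesis unfolding h_def by (simp add: ennreal_enn2real_if)
  qed
  have h0: "0 \<le> h \<omega>" for \<omega> unfolding h_def by simp
  have hf: "h \<omega> \<le> f \<omega>" for \<omega>
  proof -
    have "ennreal (h \<omega>) \<le> ennreal (f \<omega>)" using g(2) gh[of \<omega>] by (metis le_fun_def)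
    thus ?thesis using nn[of \<omega>] ennreal_le_iff by blast
  qed
  have hm: "h \<in> borel_measurable M" unfolding h_def
    using borel_measurable_simple_function[OF g(1)] by measurable
  have G: "(\<integral>\<^sup>+\<omega>. ennreal (h \<omega>) \<partial>M) = integral\<^sup>S M g"
  proof -
    have "g = (\<lambda>\<omega>. ennreal (h \<omega>))" by (rule ext) (rule gh)
    thus ?thesis using nn_integral_eq_simple_integral[OF g(1)] by simp
  qed
  have Gle: "(\<integral>\<^sup>+\<omega>. ennreal (h \<omega>) \<partial>M) \<le> F" unfolding F_def
    using hf by (intro nn_integral_mono ennreal_leI) simp
  have ih: "integrable M h"
    using Gle fin hm h0 unfolding F_def by (intro integrableI_nonneg) (auto simp: top.extremum_strict le_less_trans)
  have h2le: "(\<integral>\<^sup>+\<omega>. ennreal (h \<omega>^2) \<partial>M) \<le> ennreal (K * Fr^2)"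
  proof -
    have "(\<integral>\<^sup>+\<omega>. ennreal (h \<omega>^2) \<partial>M) \<le> (\<integral>\<^sup>+\<omega>. ennreal (f \<omega>^2) \<partial>M)"
      using hf h0 by (intro nn_integral_mono) (simp add: power_mono)
    also have "\<dots> \<le> ennreal K * F^2" using four unfolding F_def .
    also have "\<dots> = ennreal (K * Fr^2)" using FFr K Fr0 by (simp add: ennreal_mult ennreal_power)
    finally show ?thesis .
  qed
  have ih2: "integrable M (\<lambda>\<omega>. h \<omega>^2)"
    using h2le hm by (intro integrableI_nonneg) (auto simp: le_less_trans)
  define c where "c = integral\<^sup>L M h"
  have Gc: "(\<integral>\<^sup>+\<omega>. ennreal (h \<omega>) \<partial>M) = ennreal c"
    unfolding c_def using ih h0 by (simp add: nn_integral_eq_integral)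
  have c0: "0 \<le> c" unfolding c_def using h0 by simp
  have "ennreal (Fr/2) < ennreal c" using ga G Gc by simp
  hence cFr: "Fr/2 < c" using Fr0 by (subst (asm) ennreal_less_iff) auto
  have int2: "integral\<^sup>L M (\<lambda>\<omega>. h \<omega>^2) \<le> K * Fr^2"
  proof -
    have "ennreal (integral\<^sup>L M (\<lambda>\<omega>. h \<omega>^2)) \<le> ennreal (K * Fr^2)"
      using h2le ih2 by (simp add: nn_integral_eq_integral)
    thus ?thesis using K by (simp add: ennreal_le_iff)
  qed
  have "K * Fr^2 \<le> (4*K) * c^2"
  proof -
    have "Fr^2 \<le> (2*c)^2" using cFr Fr0 by (intro power_mono) auto
    thus ?thesis using K by (simp add: power_mult_distrib)
  qed
  with int2 have b: "integral\<^sup>L M (\<lambda>\<omega>. h \<omega>^2) \<le> (4*K) * c^2" by linarith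
  have pz: "measure M {\<omega>\<in>space M. c/2 \<le> h \<omega>} \<ge> 1/(4*(4*K))"
    using PZ[OF P hm h0 ih ih2 _ c_def _ b] K epsFr cFr eps by simp
  show ?thesis
  proof (intro bexI conjI)
    show "{\<omega>\<in>space M. c/2 \<le> h \<omega>} \<in> sets M" using hm by measurable
    show "1/(16*K) \<le> measure M {\<omega>\<in>space M. c/2 \<le> h \<omega>}" using pz by simp
    show "\<forall>\<omega>\<in>{\<omega>\<in>space M. c/2 \<le> h \<omega>}. \<epsilon>/4 \<le> f \<omega>"
    proof
      fix \<omega> assume "\<omega> \<in> {\<omega>\<in>space M. c/2 \<le> h \<omega>}"
      hence "c/2 \<le> h \<omega>" by simp
      with hf[of \<omega>] cFr epsFr show "\<epsilon>/4 \<le> f \<omega>" by linarith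
    qed
  qed
qed


theorem theorem3:
  fixes M :: "'b measure"
    and X :: "nat \<Rightarrow> 'b \<Rightarrow> 'a::{real_inner, complete_space}"
    and K :: real
  assumes "prob_space M"
    and meas: "\<And>n. n \<ge> 1 \<Longrightarrow> X n \<in> borel_measurable M"
    and symm: "\<And>n. n \<ge> 1 \<Longrightarrow> symmetrical M (X n)"
    and second: "\<And>n. n \<ge> 1 \<Longrightarrow> integrable M (\<lambda>\<omega>. (norm (X n \<omega>))^2)"
    and as_conv: "AE \<omega> in M. convergent (\<lambda>n. \<Sum>i = 1..n. X i \<omega>)"
    and K_pos: "K > 0"
    and fourth: "\<And>m j. j \<ge> 1 \<Longrightarrow>
        (\<integral>\<^sup>+ \<omega>. ennreal ((norm (\<Sum>i = m+1..m+j. X i \<omega>))^4) \<partial>M)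
          \<le> ennreal K * (\<integral>\<^sup>+ \<omega>. ennreal ((norm (\<Sum>i = m+1..m+j. X i \<omega>))^2) \<partial>M)^2"
  shows "(\<lambda>m. SUP j\<in>{1..}. \<integral>\<^sup>+ \<omega>. ennreal ((norm ((\<Sum>i = 1..m+j. X i \<omega>) - (\<Sum>i = 1..m. X i \<omega>)))^2) \<partial>M)
           \<longlonglongrightarrow> 0"
proof -
  interpret P: prob_space M by fact
  define f where "f m j \<omega> = (norm (\<Sum>i = m+1..m+j. X i \<omega>))^2" for m j \<omega>
  have diff: "(\<Sum>i = 1..m+j. X i \<omega>) - (\<Sum>i = 1..m. X i \<omega>) = (\<Sum>i = m+1..m+j. X i \<omega>)" for m j \<omega>
    using sum.ub_add_nat[of 1 m "\<lambda>i. X i \<omega>" j] by simp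
  have goal_eq: "(\<lambda>m. SUP j\<in>{1..}. \<integral>\<^sup>+ \<omega>. ennreal ((norm ((\<Sum>i = 1..m+j. X i \<omega>) - (\<Sum>i = 1..m. X i \<omega>)))^2) \<partial>M)
      = (\<lambda>m. SUP j\<in>{1..}. \<integral>\<^sup>+ \<omega>. ennreal (f m j \<omega>) \<partial>M)"
    by (simp only: diff f_def)
  have fnn: "0 \<le> f m j \<omega>" for m j \<omega> by (simp add: f_def)
  have fin: "(\<integral>\<^sup>+ \<omega>. ennreal (f m j \<omega>) \<partial>M) < \<infinity>" for m j
  proof -
    define bnd where "bnd \<omega> = 2^card{m+1..m+j} * (\<Sum>i\<in>{m+1..m+j}. norm (X i \<omega>)^2)" for \<omega>
    have ib: "integrable M bnd" unfolding bnd_def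
      by (intro integrable_mult_right Bochner_Integration.integrable_sum second) auto
    have "(\<integral>\<^sup>+ \<omega>. ennreal (f m j \<omega>) \<partial>M) \<le> (\<integral>\<^sup>+ \<omega>. ennreal (bnd \<omega>) \<partial>M)"
      unfolding f_def bnd_def by (intro nn_integral_mono ennreal_leI sum_sq_bound) simp
    also have "\<dots> = ennreal (integral\<^sup>L M bnd)"
      by (rule nn_integral_eq_integral[OF ib]) (auto simp: bnd_def sum_nonneg)
    finally show ?thesis using le_less_trans by fastforce
  qed
  have four: "(\<integral>\<^sup>+ \<omega>. ennreal (f m j \<omega>^2) \<partial>M) \<le> ennreal K * (\<integral>\<^sup>+ \<omega>. ennreal (f m j \<omega>) \<partial>M)^2"
    if "j \<ge> 1" for m j
    using fourth[OF that, of m] by (simp add: f_def flip: power_mult)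
  obtain N where N: "N \<in> null_sets M" "{\<omega>\<in>space M. \<not> convergent (\<lambda>n. \<Sum>i = 1..n. X i \<omega>)} \<subseteq> N"
    using as_conv by (auto elim!: AE_E)
  define \<delta> where "\<delta> = 1/(16*K)"
  have \<delta>0: "\<delta> > 0" unfolding \<delta>_def using K_pos by simp
  have key: "eventually (\<lambda>m. \<forall>j\<ge>1. (\<integral>\<^sup>+ \<omega>. ennreal (f m j \<omega>) \<partial>M) \<le> ennreal \<epsilon>) sequentially"
    if eps: "\<epsilon> > 0" for \<epsilon>
  proof (rule ccontr)
    assume "\<not> ?thesis"
    hence ex: "\<forall>n. \<exists>m\<ge>n. \<exists>j\<ge>1. ennreal \<epsilon> < (\<integral>\<^sup>+ \<omega>. ennreal (f m j \<omega>) \<partial>M)"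
      by (auto simp: eventually_sequentially not_le)
    define C where "C n = {\<omega>\<in>space M. \<exists>p\<ge>n. \<exists>j\<ge>1. \<epsilon>/4 \<le> f p j \<omega>}" for n
    have "\<exists>B. B \<in> sets M \<and> B \<subseteq> C n \<and> \<delta> \<le> measure M B" for n
    proof -
      obtain m j where mj: "m \<ge> n" "j \<ge> 1" "ennreal \<epsilon> < (\<integral>\<^sup>+ \<omega>. ennreal (f m j \<omega>) \<partial>M)"
        using ex by blast
      obtain B where B: "B \<in> sets M" "\<forall>\<omega>\<in>B. \<epsilon>/4 \<le> f m j \<omega>" "1/(16*K) \<le> measure M B"
        using core[OF \<open>prob_space M\<close> K_pos fnn fin four[OF mj(2)] eps mj(3)] by blast
      have "B \<subseteq> C n" unfolding C_def using B(1,2) mj(1,2) sets.sets_into_space by blast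
      with B show ?thesis unfolding \<delta>_def by blast
    qed
    then obtain B where B: "\<And>n. B n \<in> sets M" "\<And>n. B n \<subseteq> C n" "\<And>n. \<delta> \<le> measure M (B n)"
      by metis
    define D where "D n = (\<Union>k\<in>{n..}. B k)" for n
    have Ds: "range D \<subseteq> sets M" unfolding D_def using B(1) by auto
    have Ddec: "decseq D" unfolding D_def decseq_def by (auto, meson atLeast_iff order_trans)
    have DC: "D n \<subseteq> C n" for n
    proof
      fix \<omega> assume "\<omega> \<in> D n"
      then obtain k where k: "k \<ge> n" "\<omega> \<in> B k" by (auto simp: D_def)
      then have "\<omega> \<in> C k" using B(2) by blast
      then obtain p j where "\<omega> \<in> space M" "p \<ge> k" "j \<ge> 1" "\<epsilon>/4 \<le> f p j \<omega>"
        unfolding C_def by blast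
      then show "\<omega> \<in> C n" unfolding C_def using k(1) by (intro CollectI conjI exI[of _ p] exI[of _ j]) auto
    qed
    have Dm: "\<delta> \<le> measure M (D n)" for n
    proof -
      have "measure M (B n) \<le> measure M (D n)"
        using Ds by (intro P.finite_measure_mono) (auto simp: D_def)
      thus ?thesis using B(3)[of n] by linarith
    qed
    have lim: "(\<lambda>n. measure M (D n)) \<longlonglongrightarrow> measure M (\<Inter>n. D n)"
      by (rule P.finite_Lim_measure_decseq[OF Ds Ddec])
    have "\<delta> \<le> measure M (\<Inter>n. D n)"
      by (rule LIMSEQ_le_const[OF lim]) (use Dm in auto)
    moreover have "(\<Inter>n. D n) \<subseteq> N"
    proof
      fix \<omega> assume w: "\<omega> \<in> (\<Inter>n. D n)"
      hence wC: "\<omega> \<in> C n" for n using DC by blast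
      hence ws: "\<omega> \<in> space M" unfolding C_def by blast
      show "\<omega> \<in> N"
      proof (rule ccontr)
        assume "\<omega> \<notin> N"
        hence "convergent (\<lambda>n. \<Sum>i = 1..n. X i \<omega>)" using N(2) ws by blast
        hence "Cauchy (\<lambda>n. \<Sum>i = 1..n. X i \<omega>)" by (rule convergent_Cauchy)
        from metric_CauchyD[OF this, of "sqrt (\<epsilon>/4)"] eps obtain M0 where
          M0: "\<forall>m\<ge>M0. \<forall>n\<ge>M0. dist (\<Sum>i = 1..m. X i \<omega>) (\<Sum>i = 1..n. X i \<omega>) < sqrt (\<epsilon>/4)"
          by auto
        from wC[of M0] obtain p j where pj: "p \<ge> M0" "j \<ge> 1" "\<epsilon>/4 \<le> f p j \<omega>"
          unfolding C_def by blast
        have "dist (\<Sum>i = 1..p+j. X i \<omega>) (\<Sum>i = 1..p. X i \<omega>) < sqrt (\<epsilon>/4)"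
          using M0 pj(1) by auto
        hence "norm (\<Sum>i = p+1..p+j. X i \<omega>) < sqrt (\<epsilon>/4)"
          by (simp only: dist_norm diff)
        hence "norm (\<Sum>i = p+1..p+j. X i \<omega>)^2 < (sqrt (\<epsilon>/4))^2"
          by (intro power_strict_mono) auto
        hence "f p j \<omega> < \<epsilon>/4" using eps by (simp add: f_def)
        with pj(3) show False by simp
      qed
    qed
    hence "measure M (\<Inter>n. D n) \<le> measure M N"
      using N(1) by (intro P.finite_measure_mono) auto
    moreover have "measure M N = 0" using N(1) by (simp add: measure_eq_0_null_sets)
    ultimately show False using \<delta>0 by linarith
  qed
  show ?thesis unfolding goal_eq
  proof (rule order_tendstoI)
    fix a :: ennreal assume "a < 0" thus "eventually (\<lambda>m. a < (SUP j\<in>{1..}. \<integral>\<^sup>+ \<omega>. ennreal (f m j \<omega>) \<partial>M)) sequentially"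
      by simp
  next
    fix a :: ennreal assume a: "0 < a"
    obtain b where b: "0 < b" "b < a" using dense[OF a] by blast
    have bt: "b < \<top>" using b(2) top.not_eq_extremum by fastforce
    define \<epsilon> where "\<epsilon> = enn2real b"
    have be: "b = ennreal \<epsilon>" unfolding \<epsilon>_def using bt by (simp add: ennreal_enn2real_if)
    have e0: "\<epsilon> > 0" using b(1) be by simp
    show "eventually (\<lambda>m. (SUP j\<in>{1..}. \<integral>\<^sup>+ \<omega>. ennreal (f m j \<omega>) \<partial>M) < a) sequentially"
      using key[OF e0]
    proof eventually_elim
      case (elim m)
      hence "(SUP j\<in>{1..}. \<integral>\<^sup>+ \<omega>. ennreal (f m j \<omega>) \<partial>M) \<le> ennreal \<epsilon>"
        by (intro SUP_least) auto
      thus ?case using b(2) be by simp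
    qed
  qed
qed

end
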